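(* There is an $\mathrm{FP}$-formula $\varphi_{1}(x,y,y')$ over the vocabulary $\{E\}$ such that for all prime permutation graphs $G=(V,E)$ and all $w,v,v'\in V$: $G\models\varphi_{1}[w,v,v']$ iff $v\vartriangleleft_1^w v'$; and for any such formula, $\varphi(x,y,y'):=\varphi_{1}(x,y,y')\lor y=y'$ defines orders on the class of prime permutation graphs, i.e., for every prime permutation graph $G$ there is $w\in V$ such that $\{(v,v')\mid G\models\varphi[w,v,v']\}$ is a linear order on $V$.
   Context: Graphs are finite, simple, undirected, with nonempty vertex set. A module of $G$ is a nonempty $M\subseteq V$ such that every vertex outside $M$ is adjacent to all or none of $M$; $G$ is prime if its only modules are $V$ and the singletons. A realizer of $G$ is a pair $(<_1,<_2)$ of strict linear orders on $V$ such that distinct $u,v$ are adjacent iff they appear in different orders in $<_1$ and $<_2$; $G$ is a permutation graph if it has a realizer. For a pair of binary relations $(\lhd_1,\lhd_2)$ on $V$: its transitive closure is $(\lhd_1^T,\lhd_2^T)$ (componentwise); its closure under $E$ is $(\lhd_1^E,\lhd_2^E)$ where, for $i\in[2]$, $\lhd_i^E=\lhd_i\cup\{(v,u)\mid u\lhd_{3-i}v,\ \{u,v\}\in E\}\cup\{(u,v)\mid u\lhd_{3-i}v,\ \{u,v\}\notin E\}$. For $w\in V$ define $\lhd_{1,0}^w=\{(w,v)\mid v\ne w\}$, $\lhd_{2,0}^w=\emptyset$, and for $k\ge0$, $(\lhd_{1,k+1}^w,\lhd_{2,k+1}^w)=((\lhd_{1,k}^w,\lhd_{2,k}^w)^E)^T$;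 $\lhd_i^w$ is the stabilized value. $\mathrm{FP}$ is (inflationary) fixed-point logic, i.e., first-order logic extended with inflationary fixed-point operators. *)

theory Defs
  imports Main
begin

definition graph :: "'a set \<Rightarrow> 'a set set \<Rightarrow> bool" where
  "graph V E \<longleftrightarrow> finite V \<and> V \<noteq> {} \<and>
     E \<subseteq> {{u, v} | u v. u \<in> V \<and> v \<in> V \<and> u \<noteq> v}"

definition is_module :: "'a set \<Rightarrow> 'a set set \<Rightarrow> 'a set \<Rightarrow> bool" where
  "is_module V E M \<longleftrightarrow> M \<noteq> {} \<and> M \<subseteq> V \<and>
     (\<forall>x \<in> V - M. (\<forall>m \<in> M. {x, m} \<in> E) \<or> (\<forall>m \<in> M. {x, m} \<notin> E))"

definition prime_graph :: "'a set \<Rightarrow> 'a set set \<Rightarrow> bool" where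
  "prime_graph V E \<longleftrightarrow>
     (\<forall>M. is_module V E M \<longrightarrow> M = V \<or> (\<exists>x. M = {x}))"

definition strict_lin_order :: "'a set \<Rightarrow> 'a rel \<Rightarrow> bool" where
  "strict_lin_order V r \<longleftrightarrow> r \<subseteq> V \<times> V \<and> trans r \<and> irrefl r \<and> total_on V r"

definition realizer :: "'a set \<Rightarrow> 'a set set \<Rightarrow> 'a rel \<Rightarrow> 'a rel \<Rightarrow> bool" where
  "realizer V E r1 r2 \<longleftrightarrow> strict_lin_order V r1 \<and> strict_lin_order V r2 \<and>
     (\<forall>u \<in> V. \<forall>v \<in> V. u \<noteq> v \<longrightarrow>
        ({u, v} \<in> E \<longleftrightarrow> ((u, v) \<in> r1 \<longleftrightarrow> (v, u) \<in> r2)))"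

definition permutation_graph :: "'a set \<Rightarrow> 'a set set \<Rightarrow> bool" where
  "permutation_graph V E \<longleftrightarrow> (\<exists>r1 r2. realizer V E r1 r2)"

definition closE :: "'a set set \<Rightarrow> 'a rel \<times> 'a rel \<Rightarrow> 'a rel \<times> 'a rel" where
  "closE E p = (let R1 = fst p; R2 = snd p in
     (R1 \<union> {(v, u) | u v. (u, v) \<in> R2 \<and> {u, v} \<in> E}
         \<union> {(u, v) | u v. (u, v) \<in> R2 \<and> {u, v} \<notin> E},
      R2 \<union> {(v, u) | u v. (u, v) \<in> R1 \<and> {u, v} \<in> E}
         \<union> {(u, v) | u v. (u, v) \<in> R1 \<and> {u, v} \<notin> E}))"

definition closT :: "'a rel \<times> 'a rel \<Rightarrow> 'a rel \<times> 'a rel" where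
  "closT p = ((fst p)\<^sup>+, (snd p)\<^sup>+)"

fun lhd_stage :: "'a set \<Rightarrow> 'a set set \<Rightarrow> 'a \<Rightarrow> nat \<Rightarrow> 'a rel \<times> 'a rel" where
  "lhd_stage V E w 0 = ({(w, v) | v. v \<in> V \<and> v \<noteq> w}, {})"
| "lhd_stage V E w (Suc k) = closT (closE E (lhd_stage V E w k))"

text \<open>The sequence of stages is increasing, so its stabilized value is its union.\<close>
definition lhd1 :: "'a set \<Rightarrow> 'a set set \<Rightarrow> 'a \<Rightarrow> 'a rel" where
  "lhd1 V E w = (\<Union>k. fst (lhd_stage V E w k))"

definition lhd2 :: "'a set \<Rightarrow> 'a set set \<Rightarrow> 'a \<Rightarrow> 'a rel" where
  "lhd2 V E w = (\<Union>k. snd (lhd_stage V E w k))"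

text \<open>First-order variables and relation variables are natural numbers.
  IFP R xs phi ts is the formula [ifp_{R, xs} phi](ts).\<close>
datatype fp =
    FEq nat nat
  | FEdge nat nat
  | FRel nat "nat list"
  | FNeg fp
  | FOr fp fp
  | FEx nat fp
  | FIFP nat "nat list" fp "nat list"

fun upds :: "('v \<Rightarrow> 'a) \<Rightarrow> 'v list \<Rightarrow> 'a list \<Rightarrow> ('v \<Rightarrow> 'a)" where
  "upds \<alpha> [] as = \<alpha>"
| "upds \<alpha> (x # xs) [] = \<alpha>"
| "upds \<alpha> (x # xs) (a # as) = (upds \<alpha> xs as)(x := a)"

fun sat :: "'a set \<Rightarrow> 'a set set \<Rightarrow> (nat \<Rightarrow> 'a) \<Rightarrow> (nat \<Rightarrow> 'a list set) \<Rightarrow> fp \<Rightarrow> bool" where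
  "sat V E \<alpha> \<rho> (FEq x y) = (\<alpha> x = \<alpha> y)"
| "sat V E \<alpha> \<rho> (FEdge x y) = ({\<alpha> x, \<alpha> y} \<in> E)"
| "sat V E \<alpha> \<rho> (FRel R ts) = (map \<alpha> ts \<in> \<rho> R)"
| "sat V E \<alpha> \<rho> (FNeg \<phi>) = (\<not> sat V E \<alpha> \<rho> \<phi>)"
| "sat V E \<alpha> \<rho> (FOr \<phi> \<psi>) = (sat V E \<alpha> \<rho> \<phi> \<or> sat V E \<alpha> \<rho> \<psi>)"
| "sat V E \<alpha> \<rho> (FEx x \<phi>) = (\<exists>a \<in> V. sat V E (\<alpha>(x := a)) \<rho> \<phi>)"
| "sat V E \<alpha> \<rho> (FIFP R xs \<phi> ts) =
     (map \<alpha> ts \<in> (\<Union>n. ((\<lambda>S. S \<union> {as. length as = length xs \<and> set as \<subseteq> V \<and>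
                                 sat V E (upds \<alpha> xs as) (\<rho>(R := S)) \<phi>}) ^^ n) {}))"

end

theory Submission
  imports Defs
begin

lemma stage_mono1: "fst (lhd_stage V E w k) \<subseteq> fst (lhd_stage V E w (Suc k))"
  by (auto simp: closT_def closE_def Let_def)
lemma stage_mono2: "snd (lhd_stage V E w k) \<subseteq> snd (lhd_stage V E w (Suc k))"
  by (auto simp: closT_def closE_def Let_def)
lemma stage_mono1': "i \<le> j \<Longrightarrow> fst (lhd_stage V E w i) \<subseteq> fst (lhd_stage V E w j)"
  using lift_Suc_mono_le[of "\<lambda>k. fst (lhd_stage V E w k)", OF stage_mono1] by blast
lemma stage_mono2': "i \<le> j \<Longrightarrow> snd (lhd_stage V E w i) \<subseteq> snd (lhd_stage V E w j)"
  using lift_Suc_mono_le[of "\<lambda>k. snd (lhd_stage V E w k)", OF stage_mono2] by blast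

lemma stage_VV: "w \<in> V \<Longrightarrow> fst (lhd_stage V E w k) \<subseteq> V \<times> V \<and> snd (lhd_stage V E w k) \<subseteq> V \<times> V"
proof (induction k)
  case 0 then show ?case using \<open>w \<in> V\<close> by auto
next
  case (Suc k)
  let ?p = "lhd_stage V E w k"
  have "fst (closE E ?p) \<subseteq> V \<times> V" "snd (closE E ?p) \<subseteq> V \<times> V"
    using Suc by (auto simp: closE_def Let_def)
  then show ?case by (simp add: closT_def trancl_subset_Sigma)
qed

lemma L1_VV: "w \<in> V \<Longrightarrow> lhd1 V E w \<subseteq> V \<times> V" using stage_VV[of w V E] unfolding lhd1_def by blast
lemma L2_VV: "w \<in> V \<Longrightarrow> lhd2 V E w \<subseteq> V \<times> V" using stage_VV[of w V E] unfolding lhd2_def by blast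

lemma L1_trans: "trans (lhd1 V E w)"
proof (rule transI)
  fix x y z assume "(x,y) \<in> lhd1 V E w" "(y,z) \<in> lhd1 V E w"
  then obtain i j where i: "(x,y) \<in> fst (lhd_stage V E w i)" and j: "(y,z) \<in> fst (lhd_stage V E w j)"
    unfolding lhd1_def by blast
  let ?m = "Suc (max i j)"
  have "(x,y) \<in> fst (lhd_stage V E w ?m)" "(y,z) \<in> fst (lhd_stage V E w ?m)"
    using i j stage_mono1'[where i=i and j="?m" and V=V and E=E and w=w] stage_mono1'[where i=j and j="?m" and V=V and E=E and w=w] max.cobounded1[of i j] max.cobounded2[of j i] le_SucI by blast+
  moreover have "trans (fst (lhd_stage V E w ?m))" by (simp only: lhd_stage.simps closT_def fst_conv trans_trancl)
  ultimately have "(x,z) \<in> fst (lhd_stage V E w ?m)" by (metis transD)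
  then show "(x,z) \<in> lhd1 V E w" unfolding lhd1_def by blast
qed

lemma L2_trans: "trans (lhd2 V E w)"
proof (rule transI)
  fix x y z assume "(x,y) \<in> lhd2 V E w" "(y,z) \<in> lhd2 V E w"
  then obtain i j where i: "(x,y) \<in> snd (lhd_stage V E w i)" and j: "(y,z) \<in> snd (lhd_stage V E w j)"
    unfolding lhd2_def by blast
  let ?m = "Suc (max i j)"
  have "(x,y) \<in> snd (lhd_stage V E w ?m)" "(y,z) \<in> snd (lhd_stage V E w ?m)"
    using i j stage_mono2'[where i=i and j="?m" and V=V and E=E and w=w] stage_mono2'[where i=j and j="?m" and V=V and E=E and w=w] max.cobounded1[of i j] max.cobounded2[of j i] le_SucI by blast+
  moreover have "trans (snd (lhd_stage V E w ?m))" by (simp only: lhd_stage.simps closT_def snd_conv trans_trancl)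
  ultimately have "(x,z) \<in> snd (lhd_stage V E w ?m)" by (metis transD)
  then show "(x,z) \<in> lhd2 V E w" unfolding lhd2_def by blast
qed

lemma T21e: "(u,v) \<in> lhd2 V E w \<Longrightarrow> {u,v} \<in> E \<Longrightarrow> (v,u) \<in> lhd1 V E w"
proof -
  assume "(u,v) \<in> lhd2 V E w" "{u,v} \<in> E"
  then obtain k where "(u,v) \<in> snd (lhd_stage V E w k)" unfolding lhd2_def by blast
  then have "(v,u) \<in> fst (lhd_stage V E w (Suc k))" using \<open>{u,v} \<in> E\<close>
    by (auto simp: closT_def closE_def Let_def)
  then show ?thesis unfolding lhd1_def by blast
qed
lemma T21n: "(u,v) \<in> lhd2 V E w \<Longrightarrow> {u,v} \<notin> E \<Longrightarrow> (u,v) \<in> lhd1 V E w"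
proof -
  assume "(u,v) \<in> lhd2 V E w" "{u,v} \<notin> E"
  then obtain k where "(u,v) \<in> snd (lhd_stage V E w k)" unfolding lhd2_def by blast
  then have "(u,v) \<in> fst (lhd_stage V E w (Suc k))" using \<open>{u,v} \<notin> E\<close>
    by (auto simp: closT_def closE_def Let_def)
  then show ?thesis unfolding lhd1_def by blast
qed
lemma T12e: "(u,v) \<in> lhd1 V E w \<Longrightarrow> {u,v} \<in> E \<Longrightarrow> (v,u) \<in> lhd2 V E w"
proof -
  assume "(u,v) \<in> lhd1 V E w" "{u,v} \<in> E"
  then obtain k where "(u,v) \<in> fst (lhd_stage V E w k)" unfolding lhd1_def by blast
  then have "(v,u) \<in> snd (lhd_stage V E w (Suc k))" using \<open>{u,v} \<in> E\<close>
    by (auto simp: closT_def closE_def Let_def)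
  then show ?thesis unfolding lhd2_def by blast
qed
lemma T12n: "(u,v) \<in> lhd1 V E w \<Longrightarrow> {u,v} \<notin> E \<Longrightarrow> (u,v) \<in> lhd2 V E w"
proof -
  assume "(u,v) \<in> lhd1 V E w" "{u,v} \<notin> E"
  then obtain k where "(u,v) \<in> fst (lhd_stage V E w k)" unfolding lhd1_def by blast
  then have "(u,v) \<in> snd (lhd_stage V E w (Suc k))" using \<open>{u,v} \<notin> E\<close>
    by (auto simp: closT_def closE_def Let_def)
  then show ?thesis unfolding lhd2_def by blast
qed

lemma L1_base: "v \<in> V \<Longrightarrow> v \<noteq> w \<Longrightarrow> (w,v) \<in> lhd1 V E w"
  unfolding lhd1_def by (rule UN_I[of 0]) auto




lemma key:
  assumes za: "(z,a) \<in> lhd1 V E w \<or> (a,z) \<in> lhd1 V E w"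
    and zb: "(z,b) \<in> lhd1 V E w \<or> (b,z) \<in> lhd1 V E w"
    and ab: "\<not> ((a,b) \<in> lhd1 V E w \<or> (b,a) \<in> lhd1 V E w)"
  shows "{z,a} \<in> E \<longleftrightarrow> {z,b} \<in> E"
proof -
  have t1: "\<And>x y u. (x,y) \<in> lhd1 V E w \<Longrightarrow> (y,u) \<in> lhd1 V E w \<Longrightarrow> (x,u) \<in> lhd1 V E w"
    using L1_trans[of V E w] by (metis transD)
  have t2: "\<And>x y u. (x,y) \<in> lhd2 V E w \<Longrightarrow> (y,u) \<in> lhd2 V E w \<Longrightarrow> (x,u) \<in> lhd2 V E w"
    using L2_trans[of V E w] by (metis transD)
  have d2: "(x,y) \<in> lhd2 V E w \<Longrightarrow> (x,y) \<in> lhd1 V E w \<or> (y,x) \<in> lhd1 V E w" for x y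
    using T21e[of x y V E w] T21n[of x y V E w] by blast
  have nab2: "(a,b) \<notin> lhd2 V E w" "(b,a) \<notin> lhd2 V E w" using d2 ab by metis+
  have c: "{z,a} = {a,z}" "{z,b} = {b,z}" by auto
  show ?thesis
  proof (rule ccontr)
    assume ne: "\<not> ({z,a} \<in> E \<longleftrightarrow> {z,b} \<in> E)"
    consider "(z,a) \<in> lhd1 V E w" "(z,b) \<in> lhd1 V E w" | "(a,z) \<in> lhd1 V E w" "(b,z) \<in> lhd1 V E w"
      | "(z,a) \<in> lhd1 V E w" "(b,z) \<in> lhd1 V E w" | "(a,z) \<in> lhd1 V E w" "(z,b) \<in> lhd1 V E w"
      using za zb by blast
    then show False
    proof cases
      case 1
      show False
      proof (cases "{z,a} \<in> E")
        case True
        then have "{z,b} \<notin> E" using ne by blast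
        then have "(z,b) \<in> lhd2 V E w" using 1 T12n by metis
        moreover have "(a,z) \<in> lhd2 V E w" using 1 True T12e by metis
        ultimately show False using t2 nab2 by metis
      next
        case False
        then have "{z,b} \<in> E" using ne by blast
        then have "(b,z) \<in> lhd2 V E w" using 1 T12e by metis
        moreover have "(z,a) \<in> lhd2 V E w" using 1 False T12n by metis
        ultimately show False using t2 nab2 by metis
      qed
    next
      case 2
      show False
      proof (cases "{a,z} \<in> E")
        case True
        then have "{b,z} \<notin> E" using ne c by simp
        then have "(b,z) \<in> lhd2 V E w" using 2 T12n by metis
        moreover have "(z,a) \<in> lhd2 V E w" using 2 True T12e by metis
        ultimately show False using t2 nab2 by metis
      next
        case False
        then have "{b,z} \<in> E" using ne c by simp
        then have "(z,b) \<in> lhd2 V E w" using 2 T12e by metis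
        moreover have "(a,z) \<in> lhd2 V E w" using 2 False T12n by metis
        ultimately show False using t2 nab2 by metis
      qed
    next
      case 3 then show False using t1 ab by metis
    next
      case 4 then show False using t1 ab by metis
    qed
  qed
qed


lemma totality:
  assumes prime: "prime_graph V E" and wV: "w \<in> V"
    and aV: "a \<in> V" and bV: "b \<in> V" and neq: "a \<noteq> b"
  shows "(a,b) \<in> lhd1 V E w \<or> (b,a) \<in> lhd1 V E w"
proof (rule ccontr)
  define dec where "dec x y \<longleftrightarrow> (x,y) \<in> lhd1 V E w \<or> (y,x) \<in> lhd1 V E w" for x y
  assume nab: "\<not> ((a,b) \<in> lhd1 V E w \<or> (b,a) \<in> lhd1 V E w)"
  define U where "U = {(x,y). x \<in> V \<and> y \<in> V \<and> x \<noteq> y \<and> \<not> dec x y}"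
  define K where "K = {x. (a,x) \<in> U\<^sup>*}"
  have Usym: "(x,y) \<in> U \<Longrightarrow> (y,x) \<in> U" for x y unfolding U_def dec_def by auto
  have aK: "a \<in> K" unfolding K_def by simp
  have bK: "b \<in> K" unfolding K_def using aV bV neq nab
    by (auto simp: U_def dec_def)
  have KV: "K \<subseteq> V"
  proof
    fix x assume "x \<in> K"
    then have "(a,x) \<in> U\<^sup>*" unfolding K_def by simp
    then show "x \<in> V" by (induction rule: rtrancl_induct) (use aV U_def in auto)
  qed
  have wdec: "\<And>y. y \<in> V \<Longrightarrow> y \<noteq> w \<Longrightarrow> dec w y" unfolding dec_def using L1_base[where V=V and E=E and w=w] by blast
  have wK: "w \<notin> K"
  proof
    assume "w \<in> K"
    then have aw: "(a,w) \<in> U\<^sup>*" unfolding K_def by simp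
    have "a \<noteq> w" using wdec bV neq nab unfolding dec_def by blast
    then obtain y where "(y,w) \<in> U" using aw by (metis rtranclE)
    then show False unfolding U_def using wdec dec_def by blast
  qed
  have mod: "is_module V E K"
    unfolding is_module_def
  proof (intro conjI ballI)
    show "K \<noteq> {}" using aK by blast
    show "K \<subseteq> V" by (rule KV)
    fix x assume xV: "x \<in> V - K"
    have xdec: "dec x m" if "m \<in> K" for m
    proof (rule ccontr)
      assume "\<not> dec x m"
      moreover have "x \<noteq> m" using xV that by blast
      ultimately have "(m,x) \<in> U" unfolding U_def using xV that KV by (auto simp: dec_def)
      then have "x \<in> K" using that unfolding K_def by (simp add: rtrancl.rtrancl_into_rtrancl)
      then show False using xV by blast
    qed
    have "\<forall>m \<in> K. {x,m} \<in> E \<longleftrightarrow> {x,a} \<in> E"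
    proof
      fix m assume "m \<in> K"
      then have "(a,m) \<in> U\<^sup>*" unfolding K_def by simp
      then show "{x,m} \<in> E \<longleftrightarrow> {x,a} \<in> E"
      proof (induction rule: rtrancl_induct)
        case base then show ?case by simp
      next
        case (step y m)
        have yK: "y \<in> K" using step.hyps(1) unfolding K_def by simp
        have mK: "m \<in> K" using step.hyps unfolding K_def by (simp add: rtrancl.rtrancl_into_rtrancl)
        have "\<not> dec y m" using step.hyps(2) unfolding U_def by simp
        then have "{x,y} \<in> E \<longleftrightarrow> {x,m} \<in> E"
          using key[of x y V E w m] xdec[OF yK] xdec[OF mK] unfolding dec_def by blast
        then show ?case using step.IH by blast
      qed
    qed
    then show "(\<forall>m\<in>K. {x, m} \<in> E) \<or> (\<forall>m\<in>K. {x, m} \<notin> E)" by blast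
  qed
  then have "K = V \<or> (\<exists>x. K = {x})" using prime unfolding prime_graph_def by blast
  then show False using wK wV aK bK neq by blast
qed



lemma trancl_sub_trans: "A \<subseteq> r \<Longrightarrow> trans r \<Longrightarrow> A\<^sup>+ \<subseteq> r"
  by (metis trancl_id trancl_mono subsetI)

lemma stage_sub:
  assumes r: "realizer V E r1 r2" and wmin: "\<forall>v\<in>V. v \<noteq> w \<longrightarrow> (w,v) \<in> r1"
  shows "fst (lhd_stage V E w k) \<subseteq> r1 \<and> snd (lhd_stage V E w k) \<subseteq> r2"
proof (induction k)
  case 0 then show ?case using wmin by auto
next
  case (Suc k)
  have s1: "strict_lin_order V r1" and s2: "strict_lin_order V r2" using r unfolding realizer_def by auto
  have rr: "\<And>u v. u \<in> V \<Longrightarrow> v \<in> V \<Longrightarrow> u \<noteq> v \<Longrightarrow> ({u, v} \<in> E \<longleftrightarrow> ((u, v) \<in> r1 \<longleftrightarrow> (v, u) \<in> r2))"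
    using r unfolding realizer_def by blast
  have as1: "\<And>u v. (u,v) \<in> r1 \<Longrightarrow> (v,u) \<notin> r1" using s1 unfolding strict_lin_order_def
    by (metis irrefl_def transD)
  have as2: "\<And>u v. (u,v) \<in> r2 \<Longrightarrow> (v,u) \<notin> r2" using s2 unfolding strict_lin_order_def
    by (metis irrefl_def transD)
  have ir1: "\<And>u. (u,u) \<notin> r1" using s1 unfolding strict_lin_order_def irrefl_def by blast
  have ir2: "\<And>u. (u,u) \<notin> r2" using s2 unfolding strict_lin_order_def irrefl_def by blast
  have V1: "r1 \<subseteq> V \<times> V" and V2: "r2 \<subseteq> V \<times> V" using s1 s2 unfolding strict_lin_order_def by auto
  have tot1: "\<And>u v. u \<in> V \<Longrightarrow> v \<in> V \<Longrightarrow> u \<noteq> v \<Longrightarrow> (u,v) \<in> r1 \<or> (v,u) \<in> r1"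
    using s1 unfolding strict_lin_order_def total_on_def by blast
  have tot2: "\<And>u v. u \<in> V \<Longrightarrow> v \<in> V \<Longrightarrow> u \<noteq> v \<Longrightarrow> (u,v) \<in> r2 \<or> (v,u) \<in> r2"
    using s2 unfolding strict_lin_order_def total_on_def by blast
  have e21: "(v,u) \<in> r1" if "(u,v) \<in> r2" "{u,v} \<in> E" for u v
  proof -
    have "u \<in> V" "v \<in> V" "u \<noteq> v" using that V2 ir2 by auto
    then show ?thesis using rr[of u v] that as2[of u v] tot1[of u v] by blast
  qed
  have n21: "(u,v) \<in> r1" if "(u,v) \<in> r2" "{u,v} \<notin> E" for u v
  proof -
    have "u \<in> V" "v \<in> V" "u \<noteq> v" using that V2 ir2 by auto
    then show ?thesis using rr[of u v] that as2[of u v] tot1[of u v] by blast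
  qed
  have e12: "(v,u) \<in> r2" if "(u,v) \<in> r1" "{u,v} \<in> E" for u v
  proof -
    have "u \<in> V" "v \<in> V" "u \<noteq> v" using that V1 ir1 by auto
    then show ?thesis using rr[of u v] that by blast
  qed
  have n12: "(u,v) \<in> r2" if "(u,v) \<in> r1" "{u,v} \<notin> E" for u v
  proof -
    have "u \<in> V" "v \<in> V" "u \<noteq> v" using that V1 ir1 by auto
    then show ?thesis using rr[of u v] that tot2[of u v] by blast
  qed
  let ?p = "lhd_stage V E w k"
  have h1: "fst ?p \<subseteq> r1" "snd ?p \<subseteq> r2" using Suc by auto
  have c1: "fst (closE E ?p) \<subseteq> r1"
  proof
    fix x assume "x \<in> fst (closE E ?p)"
    then show "x \<in> r1" unfolding closE_def Let_def fst_conv using h1 e21 n21 by blast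
  qed
  have c2: "snd (closE E ?p) \<subseteq> r2"
  proof
    fix x assume "x \<in> snd (closE E ?p)"
    then show "x \<in> r2" unfolding closE_def Let_def snd_conv using h1 e12 n12 by blast
  qed
  have "trans r1" "trans r2" using s1 s2 unfolding strict_lin_order_def by auto
  then show ?case using trancl_sub_trans[OF c1] trancl_sub_trans[OF c2]
    by (simp only: lhd_stage.simps closT_def fst_conv snd_conv)
qed



lemma part2:
  assumes g: "graph V E" and p: "prime_graph V E" and pg: "permutation_graph V E"
  shows "\<exists>w\<in>V. linear_order_on V {(v, v') | v v'. v \<in> V \<and> v' \<in> V \<and> ((v,v') \<in> lhd1 V E w \<or> v = v')}"
proof -
  obtain r1 r2 where r: "realizer V E r1 r2" using pg unfolding permutation_graph_def by blast
  have s1: "strict_lin_order V r1" using r unfolding realizer_def by auto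
  have fin: "finite V" "V \<noteq> {}" using g unfolding graph_def by auto
  have V1: "r1 \<subseteq> V \<times> V" using s1 unfolding strict_lin_order_def by auto
  have "finite r1" using V1 fin by (meson finite_SigmaI finite_subset)
  moreover have "acyclic r1" using s1 unfolding strict_lin_order_def acyclic_def irrefl_def by simp
  ultimately have "wf r1" by (rule finite_acyclic_wf)
  then obtain w where wV: "w \<in> V" and wm: "\<forall>y. (y,w) \<in> r1 \<longrightarrow> y \<notin> V"
    using fin(2) unfolding wf_eq_minimal by blast
  have wmin: "\<forall>v\<in>V. v \<noteq> w \<longrightarrow> (w,v) \<in> r1"
    using s1 wm wV unfolding strict_lin_order_def total_on_def by blast
  have sub: "lhd1 V E w \<subseteq> r1"
    using stage_sub[OF r wmin] unfolding lhd1_def by blast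
  have irr: "\<And>u. (u,u) \<notin> r1" and tr: "trans r1" using s1 unfolding strict_lin_order_def irrefl_def by auto
  let ?R = "{(v, v') | v v'. v \<in> V \<and> v' \<in> V \<and> ((v,v') \<in> lhd1 V E w \<or> v = v')}"
  have "linear_order_on V ?R"
    unfolding linear_order_on_def partial_order_on_def preorder_on_def
  proof (intro conjI)
    show "?R \<subseteq> V \<times> V" by auto
    show "refl_on V ?R" unfolding refl_on_def by auto
    have t1: "\<And>x y u. (x,y) \<in> lhd1 V E w \<Longrightarrow> (y,u) \<in> lhd1 V E w \<Longrightarrow> (x,u) \<in> lhd1 V E w"
      using L1_trans[of V E w] by (metis transD)
    show "trans ?R"
    proof (rule transI)
      fix x y z assume "(x,y) \<in> ?R" "(y,z) \<in> ?R"
      then show "(x,z) \<in> ?R" using t1 by blast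
    qed
    show "antisym ?R"
    proof (rule antisymI)
      fix x y assume "(x,y) \<in> ?R" "(y,x) \<in> ?R"
      then have "x = y \<or> ((x,y) \<in> r1 \<and> (y,x) \<in> r1)" using sub by blast
      moreover have "\<not> ((x,y) \<in> r1 \<and> (y,x) \<in> r1)" using irr tr by (metis transD)
      ultimately show "x = y" by blast
    qed
    show "total_on V ?R" unfolding total_on_def
    proof (intro ballI impI)
      fix x y assume "x \<in> V" "y \<in> V" "x \<noteq> y"
      then have "(x,y) \<in> lhd1 V E w \<or> (y,x) \<in> lhd1 V E w" by (rule totality[OF p wV])
      then show "(x,y) \<in> ?R \<or> (y,x) \<in> ?R" using \<open>x \<in> V\<close> \<open>y \<in> V\<close> by blast
    qed
  qed
  then show ?thesis using wV by blast
qed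




definition FAnd :: "fp \<Rightarrow> fp \<Rightarrow> fp" where "FAnd a b = FNeg (FOr (FNeg a) (FNeg b))"
lemma sat_FAnd[simp]: "sat V E \<alpha> \<rho> (FAnd a b) = (sat V E \<alpha> \<rho> a \<and> sat V E \<alpha> \<rho> b)"
  by (simp add: FAnd_def)

definition B1 :: fp where
 "B1 = FOr (FAnd (FEq 4 0) (FNeg (FEq 5 0)))
     (FOr (FEx 6 (FAnd (FRel 0 [0,4,6]) (FRel 0 [0,6,5])))
     (FOr (FEx 6 (FAnd (FNeg (FEq 6 0)) (FAnd (FRel 0 [6,5,4]) (FEdge 4 5))))
          (FEx 6 (FAnd (FNeg (FEq 6 0)) (FAnd (FRel 0 [6,4,5]) (FNeg (FEdge 4 5)))))))"
definition B2 :: fp where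
 "B2 = FOr (FEx 6 (FAnd (FRel 0 [3,4,6]) (FRel 0 [3,6,5])))
     (FOr (FAnd (FRel 0 [0,5,4]) (FEdge 4 5)) (FAnd (FRel 0 [0,4,5]) (FNeg (FEdge 4 5))))"
definition body :: fp where
 "body = FOr (FAnd (FEq 3 0) B1) (FAnd (FNeg (FEq 3 0)) B2)"
definition phi1 :: fp where "phi1 = FIFP 0 [3,4,5] body [0,1,2]"

definition bodyS :: "'a set \<Rightarrow> 'a set set \<Rightarrow> 'a \<Rightarrow> 'a list set \<Rightarrow> 'a \<Rightarrow> 'a \<Rightarrow> 'a \<Rightarrow> bool" where
 "bodyS V E w S t x y \<longleftrightarrow>
   (t = w \<and> ((x = w \<and> y \<noteq> w) \<or> (\<exists>z\<in>V. [w,x,z] \<in> S \<and> [w,z,y] \<in> S)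
       \<or> (\<exists>s\<in>V. s \<noteq> w \<and> [s,y,x] \<in> S \<and> {x,y} \<in> E) \<or> (\<exists>s\<in>V. s \<noteq> w \<and> [s,x,y] \<in> S \<and> {x,y} \<notin> E)))
 \<or> (t \<noteq> w \<and> ((\<exists>z\<in>V. [t,x,z] \<in> S \<and> [t,z,y] \<in> S) \<or> ([w,y,x] \<in> S \<and> {x,y} \<in> E)
       \<or> ([w,x,y] \<in> S \<and> {x,y} \<notin> E)))"

lemma sat_body: "\<alpha> 0 = w \<Longrightarrow>
  sat V E (upds \<alpha> [3,4,5] [t,x,y]) (\<rho>(0:=S)) body = bodyS V E w S t x y"
  unfolding body_def B1_def B2_def bodyS_def by auto

definition G :: "'a set \<Rightarrow> 'a set set \<Rightarrow> 'a \<Rightarrow> 'a list set \<Rightarrow> 'a list set" where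
  "G V E w S = S \<union> {[t,x,y] | t x y. t \<in> V \<and> x \<in> V \<and> y \<in> V \<and> bodyS V E w S t x y}"

lemma len3: "length as = 3 \<Longrightarrow> \<exists>t x y. as = [t,x,y]"
  by (cases as; cases "tl as"; cases "tl (tl as)") (auto simp: numeral_eq_Suc)

lemma G_eq: assumes "\<alpha> 0 = w"
  shows "(\<lambda>S. S \<union> {as. length as = length [3::nat,4,5] \<and> set as \<subseteq> V \<and>
            sat V E (upds \<alpha> [3,4,5] as) (\<rho>(0:=S)) body}) = G V E w"
proof
  fix S
  show "S \<union> {as. length as = length [3::nat,4,5] \<and> set as \<subseteq> V \<and>
            sat V E (upds \<alpha> [3,4,5] as) (\<rho>(0:=S)) body} = G V E w S"
    unfolding G_def
  proof (intro arg_cong[where f="\<lambda>X. S \<union> X"] set_eqI iffI)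
    fix as assume "as \<in> {as. length as = length [3::nat,4,5] \<and> set as \<subseteq> V \<and>
            sat V E (upds \<alpha> [3,4,5] as) (\<rho>(0:=S)) body}"
    then have l: "length as = 3" and v: "set as \<subseteq> V" and s: "sat V E (upds \<alpha> [3,4,5] as) (\<rho>(0:=S)) body" by auto
    obtain t x y where "as = [t,x,y]" using len3[OF l] by blast
    then show "as \<in> {[t,x,y] | t x y. t \<in> V \<and> x \<in> V \<and> y \<in> V \<and> bodyS V E w S t x y}"
      using v s sat_body[of \<alpha> w, OF assms] by auto
  next
    fix as assume "as \<in> {[t,x,y] | t x y. t \<in> V \<and> x \<in> V \<and> y \<in> V \<and> bodyS V E w S t x y}"
    then obtain t x y where "as = [t,x,y]" "t \<in> V" "x \<in> V" "y \<in> V" "bodyS V E w S t x y" by blast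
    then show "as \<in> {as. length as = length [3::nat,4,5] \<and> set as \<subseteq> V \<and>
            sat V E (upds \<alpha> [3,4,5] as) (\<rho>(0:=S)) body}"
      using sat_body[of \<alpha> w, OF assms] by auto
  qed
qed

definition I :: "'a set \<Rightarrow> 'a set set \<Rightarrow> 'a \<Rightarrow> 'a list set" where
  "I V E w = (\<Union>n. (G V E w ^^ n) {})"

lemma sat_phi1: "\<alpha> 0 = w \<Longrightarrow> \<alpha> 1 = v \<Longrightarrow> \<alpha> 2 = v' \<Longrightarrow>
   sat V E \<alpha> \<rho> phi1 \<longleftrightarrow> [w,v,v'] \<in> I V E w"
  unfolding phi1_def I_def
  by (simp only: sat.simps G_eq) simp




lemma G_incl: "S \<subseteq> G V E w S" unfolding G_def by blast

lemma Gn_mono: "m \<le> n \<Longrightarrow> (G V E w ^^ m) {} \<subseteq> (G V E w ^^ n) {}"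
proof -
  assume mn: "m \<le> n"
  have step: "(G V E w ^^ k) {} \<subseteq> (G V E w ^^ Suc k) {}" for k
    by (simp only: funpow.simps o_apply G_incl)
  show ?thesis using lift_Suc_mono_le[of "\<lambda>k. (G V E w ^^ k) {}", OF step mn] by blast
qed

lemma I_one: "a \<in> I V E w \<Longrightarrow> \<exists>n. a \<in> (G V E w ^^ n) {}" unfolding I_def by blast

lemma I_two: "a \<in> I V E w \<Longrightarrow> b \<in> I V E w \<Longrightarrow> \<exists>n. a \<in> (G V E w ^^ n) {} \<and> b \<in> (G V E w ^^ n) {}"
proof -
  assume "a \<in> I V E w" "b \<in> I V E w"
  then obtain i j where "a \<in> (G V E w ^^ i) {}" "b \<in> (G V E w ^^ j) {}" unfolding I_def by blast
  then show ?thesis using Gn_mono[of i "max i j" V E w] Gn_mono[of j "max i j" V E w] by auto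
qed

lemma I_step: "bodyS V E w ((G V E w ^^ n) {}) t x y \<Longrightarrow> t \<in> V \<Longrightarrow> x \<in> V \<Longrightarrow> y \<in> V \<Longrightarrow> [t,x,y] \<in> I V E w"
proof -
  assume "bodyS V E w ((G V E w ^^ n) {}) t x y" "t \<in> V" "x \<in> V" "y \<in> V"
  then have "[t,x,y] \<in> (G V E w ^^ Suc n) {}" unfolding G_def by auto
  then show ?thesis unfolding I_def by blast
qed



lemma bS_trans: "z \<in> V \<Longrightarrow> [t,x,z] \<in> S \<Longrightarrow> [t,z,y] \<in> S \<Longrightarrow> bodyS V E w S t x y"
  unfolding bodyS_def by (cases "t = w") blast+
lemma bS_21e: "s \<in> V \<Longrightarrow> s \<noteq> w \<Longrightarrow> [s,y,x] \<in> S \<Longrightarrow> {x,y} \<in> E \<Longrightarrow> bodyS V E w S w x y"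
  unfolding bodyS_def by blast
lemma bS_21n: "s \<in> V \<Longrightarrow> s \<noteq> w \<Longrightarrow> [s,x,y] \<in> S \<Longrightarrow> {x,y} \<notin> E \<Longrightarrow> bodyS V E w S w x y"
  unfolding bodyS_def by blast
lemma bS_12e: "t \<noteq> w \<Longrightarrow> [w,y,x] \<in> S \<Longrightarrow> {x,y} \<in> E \<Longrightarrow> bodyS V E w S t x y"
  unfolding bodyS_def by blast
lemma bS_12n: "t \<noteq> w \<Longrightarrow> [w,x,y] \<in> S \<Longrightarrow> {x,y} \<notin> E \<Longrightarrow> bodyS V E w S t x y"
  unfolding bodyS_def by blast
lemma bS_base: "y \<noteq> w \<Longrightarrow> bodyS V E w S w w y"
  unfolding bodyS_def by blast
lemma R_trans: "[t,x,z] \<in> I V E w \<Longrightarrow> [t,z,y] \<in> I V E w \<Longrightarrow> t \<in> V \<Longrightarrow> x \<in> V \<Longrightarrow> y \<in> V \<Longrightarrow> z \<in> V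
   \<Longrightarrow> [t,x,y] \<in> I V E w"
proof -
  assume a: "[t,x,z] \<in> I V E w" "[t,z,y] \<in> I V E w" and v: "t \<in> V" "x \<in> V" "y \<in> V" "z \<in> V"
  obtain n where "[t,x,z] \<in> (G V E w ^^ n) {}" "[t,z,y] \<in> (G V E w ^^ n) {}" using I_two[OF a] by blast
  then have bb: "bodyS V E w ((G V E w ^^ n) {}) t x y" using bS_trans v(4) by metis
  then show ?thesis using I_step[OF bb] v by blast
qed

lemma R_21e: "[s,y,x] \<in> I V E w \<Longrightarrow> s \<in> V \<Longrightarrow> s \<noteq> w \<Longrightarrow> {x,y} \<in> E \<Longrightarrow> w \<in> V \<Longrightarrow> x \<in> V \<Longrightarrow> y \<in> V
   \<Longrightarrow> [w,x,y] \<in> I V E w"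
proof -
  assume a: "[s,y,x] \<in> I V E w" and h: "s \<in> V" "s \<noteq> w" "{x,y} \<in> E" "w \<in> V" "x \<in> V" "y \<in> V"
  obtain n where "[s,y,x] \<in> (G V E w ^^ n) {}" using I_one[OF a] by blast
  then have bb: "bodyS V E w ((G V E w ^^ n) {}) w x y" using bS_21e h(1,2,3) by metis
  then show ?thesis using I_step[OF bb] h by blast
qed

lemma R_21n: "[s,x,y] \<in> I V E w \<Longrightarrow> s \<in> V \<Longrightarrow> s \<noteq> w \<Longrightarrow> {x,y} \<notin> E \<Longrightarrow> w \<in> V \<Longrightarrow> x \<in> V \<Longrightarrow> y \<in> V
   \<Longrightarrow> [w,x,y] \<in> I V E w"
proof -
  assume a: "[s,x,y] \<in> I V E w" and h: "s \<in> V" "s \<noteq> w" "{x,y} \<notin> E" "w \<in> V" "x \<in> V" "y \<in> V"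
  obtain n where "[s,x,y] \<in> (G V E w ^^ n) {}" using I_one[OF a] by blast
  then have bb: "bodyS V E w ((G V E w ^^ n) {}) w x y" using bS_21n h(1,2,3) by metis
  then show ?thesis using I_step[OF bb] h by blast
qed

lemma R_12e: "[w,y,x] \<in> I V E w \<Longrightarrow> t \<in> V \<Longrightarrow> t \<noteq> w \<Longrightarrow> {x,y} \<in> E \<Longrightarrow> x \<in> V \<Longrightarrow> y \<in> V
   \<Longrightarrow> [t,x,y] \<in> I V E w"
proof -
  assume a: "[w,y,x] \<in> I V E w" and h: "t \<in> V" "t \<noteq> w" "{x,y} \<in> E" "x \<in> V" "y \<in> V"
  obtain n where "[w,y,x] \<in> (G V E w ^^ n) {}" using I_one[OF a] by blast
  then have bb: "bodyS V E w ((G V E w ^^ n) {}) t x y" using bS_12e h(2,3) by metis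
  then show ?thesis using I_step[OF bb] h by blast
qed

lemma R_12n: "[w,x,y] \<in> I V E w \<Longrightarrow> t \<in> V \<Longrightarrow> t \<noteq> w \<Longrightarrow> {x,y} \<notin> E \<Longrightarrow> x \<in> V \<Longrightarrow> y \<in> V
   \<Longrightarrow> [t,x,y] \<in> I V E w"
proof -
  assume a: "[w,x,y] \<in> I V E w" and h: "t \<in> V" "t \<noteq> w" "{x,y} \<notin> E" "x \<in> V" "y \<in> V"
  obtain n where "[w,x,y] \<in> (G V E w ^^ n) {}" using I_one[OF a] by blast
  then have bb: "bodyS V E w ((G V E w ^^ n) {}) t x y" using bS_12n h(2,3) by metis
  then show ?thesis using I_step[OF bb] h by blast
qed

lemma R_base: "y \<in> V \<Longrightarrow> y \<noteq> w \<Longrightarrow> w \<in> V \<Longrightarrow> [w,w,y] \<in> I V E w"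
proof -
  assume h: "y \<in> V" "y \<noteq> w" "w \<in> V"
  have bb: "bodyS V E w ((G V E w ^^ 0) {}) w w y" using bS_base h(2) by metis
  then show ?thesis using I_step[OF bb] h by blast
qed




definition Q :: "'a set \<Rightarrow> 'a set set \<Rightarrow> 'a \<Rightarrow> 'a \<Rightarrow> 'a \<Rightarrow> 'a \<Rightarrow> bool" where
  "Q V E w t x y \<longleftrightarrow> t \<in> V \<and> x \<in> V \<and> y \<in> V \<and>
     ((t = w \<and> (x,y) \<in> lhd1 V E w) \<or> (t \<noteq> w \<and> (x,y) \<in> lhd2 V E w))"

definition TT :: "'a set \<Rightarrow> 'a set set \<Rightarrow> 'a \<Rightarrow> 'a list set" where
  "TT V E w = {as. \<exists>t x y. as = [t,x,y] \<and> Q V E w t x y}"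

lemma memTT: "[t,x,y] \<in> TT V E w \<longleftrightarrow> Q V E w t x y" unfolding TT_def by auto

lemma body_TT:
  assumes S: "S \<subseteq> TT V E w" and b: "bodyS V E w S t x y" and v: "t \<in> V" "x \<in> V" "y \<in> V"
  shows "Q V E w t x y"
proof -
  have mS: "\<And>a b c. [a,b,c] \<in> S \<Longrightarrow> Q V E w a b c" using S memTT[of _ _ _ V E w] by blast
  have t1: "\<And>a b c. (a,b) \<in> lhd1 V E w \<Longrightarrow> (b,c) \<in> lhd1 V E w \<Longrightarrow> (a,c) \<in> lhd1 V E w"
    using L1_trans[of V E w] by (metis transD)
  have t2: "\<And>a b c. (a,b) \<in> lhd2 V E w \<Longrightarrow> (b,c) \<in> lhd2 V E w \<Longrightarrow> (a,c) \<in> lhd2 V E w"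
    using L2_trans[of V E w] by (metis transD)
  have c: "{y,x} = {x,y}" by auto
  show ?thesis
  proof (cases "t = w")
    case True
    have "(x,y) \<in> lhd1 V E w"
    proof -
      consider "x = w \<and> y \<noteq> w" | "\<exists>z\<in>V. [w,x,z] \<in> S \<and> [w,z,y] \<in> S"
        | "\<exists>s\<in>V. s \<noteq> w \<and> [s,y,x] \<in> S \<and> {x,y} \<in> E" | "\<exists>s\<in>V. s \<noteq> w \<and> [s,x,y] \<in> S \<and> {x,y} \<notin> E"
        using b True unfolding bodyS_def by blast
      then show ?thesis
      proof cases
        case 1 then show ?thesis using L1_base[of y V w E] v by blast
      next
        case 2 then obtain z where "[w,x,z] \<in> S" "[w,z,y] \<in> S" by blast
        then have "(x,z) \<in> lhd1 V E w" "(z,y) \<in> lhd1 V E w" using mS unfolding Q_def by blast+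
        then show ?thesis by (rule t1)
      next
        case 3 then obtain s where "s \<noteq> w" "[s,y,x] \<in> S" "{x,y} \<in> E" by blast
        then have "(y,x) \<in> lhd2 V E w" "{y,x} \<in> E" using mS c unfolding Q_def by auto
        then show ?thesis by (rule T21e)
      next
        case 4 then obtain s where "s \<noteq> w" "[s,x,y] \<in> S" "{x,y} \<notin> E" by blast
        then have "(x,y) \<in> lhd2 V E w" "{x,y} \<notin> E" using mS unfolding Q_def by auto
        then show ?thesis by (rule T21n)
      qed
    qed
    then show ?thesis unfolding Q_def using v True by blast
  next
    case False
    have "(x,y) \<in> lhd2 V E w"
    proof -
      consider "\<exists>z\<in>V. [t,x,z] \<in> S \<and> [t,z,y] \<in> S" | "[w,y,x] \<in> S \<and> {x,y} \<in> E"
        | "[w,x,y] \<in> S \<and> {x,y} \<notin> E"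
        using b False unfolding bodyS_def by blast
      then show ?thesis
      proof cases
        case 1 then obtain z where "[t,x,z] \<in> S" "[t,z,y] \<in> S" by blast
        then have "(x,z) \<in> lhd2 V E w" "(z,y) \<in> lhd2 V E w" using mS False unfolding Q_def by blast+
        then show ?thesis by (rule t2)
      next
        case 2
        then have "(y,x) \<in> lhd1 V E w" "{y,x} \<in> E" using mS c unfolding Q_def by auto
        then show ?thesis by (rule T12e)
      next
        case 3
        then have "(x,y) \<in> lhd1 V E w" "{x,y} \<notin> E" using mS unfolding Q_def by auto
        then show ?thesis by (rule T12n)
      qed
    qed
    then show ?thesis unfolding Q_def using v False by blast
  qed
qed

lemma G_TT: "S \<subseteq> TT V E w \<Longrightarrow> G V E w S \<subseteq> TT V E w"
proof
  fix as assume S: "S \<subseteq> TT V E w" and a: "as \<in> G V E w S"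
  show "as \<in> TT V E w"
  proof (cases "as \<in> S")
    case True then show ?thesis using S by blast
  next
    case False
    then obtain t x y where "as = [t,x,y]" "t \<in> V" "x \<in> V" "y \<in> V" "bodyS V E w S t x y"
      using a unfolding G_def by blast
    then show ?thesis using body_TT[OF S] memTT by metis
  qed
qed

lemma Gn_TT: "(G V E w ^^ n) {} \<subseteq> TT V E w"
  by (induction n) (simp_all add: G_TT)

lemma I_TT: "[t,x,y] \<in> I V E w \<Longrightarrow> Q V E w t x y"
proof -
  assume "[t,x,y] \<in> I V E w"
  then obtain n where "[t,x,y] \<in> (G V E w ^^ n) {}" unfolding I_def by blast
  then have "[t,x,y] \<in> TT V E w" using Gn_TT[where V=V and E=E and w=w and n=n] by blast
  then show ?thesis by (simp only: memTT)
qed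



lemma L_I:
  assumes wV: "w \<in> V" and t0: "t0 \<in> V" "t0 \<noteq> w"
  shows "fst (lhd_stage V E w k) \<subseteq> {(x,y). x \<in> V \<and> y \<in> V \<and> [w,x,y] \<in> I V E w} \<and>
         snd (lhd_stage V E w k) \<subseteq> {(x,y). x \<in> V \<and> y \<in> V \<and> (\<forall>t\<in>V. t \<noteq> w \<longrightarrow> [t,x,y] \<in> I V E w)}"
    (is "_ \<subseteq> ?A1 \<and> _ \<subseteq> ?A2")
proof (induction k)
  case 0 then show ?case using R_base[where V=V and w=w and E=E] wV by auto
next
  case (Suc k)
  let ?p = "lhd_stage V E w k"
  have h1: "fst ?p \<subseteq> ?A1" "snd ?p \<subseteq> ?A2" using Suc by auto
  have tr1: "trans ?A1"
  proof (rule transI)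
    fix x y z assume "(x,y) \<in> ?A1" "(y,z) \<in> ?A1"
    then show "(x,z) \<in> ?A1" using R_trans[where t=w and x=x and z=y and y=z and V=V and E=E and w=w] wV by blast
  qed
  have tr2: "trans ?A2"
  proof (rule transI)
    fix x y z assume a: "(x,y) \<in> ?A2" "(y,z) \<in> ?A2"
    show "(x,z) \<in> ?A2"
    proof (clarsimp, intro conjI ballI impI)
      show "x \<in> V" "z \<in> V" using a by auto
      fix t assume "t \<in> V" "t \<noteq> w"
      then show "[t,x,z] \<in> I V E w" using R_trans[where t=t and x=x and z=y and y=z and V=V and E=E and w=w] a by blast
    qed
  qed
  have c1: "fst (closE E ?p) \<subseteq> ?A1"
  proof
    fix q assume "q \<in> fst (closE E ?p)"
    then consider "q \<in> fst ?p" | u v where "q = (v,u)" "(u,v) \<in> snd ?p" "{u,v} \<in> E"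
      | u v where "q = (u,v)" "(u,v) \<in> snd ?p" "{u,v} \<notin> E"
      unfolding closE_def Let_def fst_conv by blast
    then show "q \<in> ?A1"
    proof cases
      case 1 then show ?thesis using h1 by blast
    next
      case (2 u v)
      then have "u \<in> V" "v \<in> V" "[t0,u,v] \<in> I V E w" "{v,u} \<in> E" using h1 t0 by (auto simp: insert_commute)
      then show ?thesis using R_21e[where s=t0 and y=u and x=v and V=V and E=E and w=w] t0 wV 2(1) by blast
    next
      case (3 u v)
      then have "u \<in> V" "v \<in> V" "[t0,u,v] \<in> I V E w" using h1 t0 by auto
      then show ?thesis using R_21n[where s=t0 and x=u and y=v and V=V and E=E and w=w] t0 wV 3 by blast
    qed
  qed
  have c2: "snd (closE E ?p) \<subseteq> ?A2"
  proof
    fix q assume "q \<in> snd (closE E ?p)"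
    then consider "q \<in> snd ?p" | u v where "q = (v,u)" "(u,v) \<in> fst ?p" "{u,v} \<in> E"
      | u v where "q = (u,v)" "(u,v) \<in> fst ?p" "{u,v} \<notin> E"
      unfolding closE_def Let_def snd_conv by blast
    then show "q \<in> ?A2"
    proof cases
      case 1 then show ?thesis using h1 by blast
    next
      case (2 u v)
      then have "u \<in> V" "v \<in> V" "[w,u,v] \<in> I V E w" "{v,u} \<in> E" using h1 by (auto simp: insert_commute)
      then show ?thesis using R_12e[where y=u and x=v and V=V and E=E and w=w] 2(1) by blast
    next
      case (3 u v)
      then have "u \<in> V" "v \<in> V" "[w,u,v] \<in> I V E w" using h1 by auto
      then show ?thesis using R_12n[where x=u and y=v and V=V and E=E and w=w] 3 by blast
    qed
  qed
  show ?case using trancl_sub_trans[OF c1 tr1] trancl_sub_trans[OF c2 tr2]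
    by (simp only: lhd_stage.simps closT_def fst_conv snd_conv)
qed

lemma phi1_correct:
  assumes wV: "w \<in> V" and vV: "v \<in> V" and v'V: "v' \<in> V"
  shows "[w,v,v'] \<in> I V E w \<longleftrightarrow> (v,v') \<in> lhd1 V E w"
proof
  assume "[w,v,v'] \<in> I V E w"
  then have "Q V E w w v v'" by (rule I_TT)
  then show "(v,v') \<in> lhd1 V E w" unfolding Q_def by simp
next
  assume L: "(v,v') \<in> lhd1 V E w"
  then obtain k where k: "(v,v') \<in> fst (lhd_stage V E w k)" unfolding lhd1_def by blast
  show "[w,v,v'] \<in> I V E w"
  proof (cases "\<exists>t0\<in>V. t0 \<noteq> w")
    case True
    then obtain t0 where t0: "t0 \<in> V" "t0 \<noteq> w" by blast
    have "(v,v') \<in> {(x,y). x \<in> V \<and> y \<in> V \<and> [w,x,y] \<in> I V E w}"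
      using L_I[OF wV t0, where k=k] k by blast
    then show ?thesis by simp
  next
    case False
    have e: "lhd_stage V E w j = ({},{})" for j
    proof (induction j)
      case 0 then show ?case using False by auto
    next
      case (Suc j) then show ?case by (simp add: closT_def closE_def)
    qed
    show ?thesis using k by (simp only: e fst_conv) simp
  qed
qed



theorem corollary5p8:
  shows "(\<exists>\<phi>1 :: fp. \<forall>(V :: nat set) E. graph V E \<and> prime_graph V E \<and> permutation_graph V E \<longrightarrow>
            (\<forall>w \<in> V. \<forall>v \<in> V. \<forall>v' \<in> V. \<forall>\<alpha> \<rho>. \<alpha> 0 = w \<and> \<alpha> 1 = v \<and> \<alpha> 2 = v' \<longrightarrow>
               (sat V E \<alpha> \<rho> \<phi>1 \<longleftrightarrow> (v, v') \<in> lhd1 V E w)))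
       \<and> (\<forall>\<phi>1 :: fp.
            (\<forall>(V :: nat set) E. graph V E \<and> prime_graph V E \<and> permutation_graph V E \<longrightarrow>
              (\<forall>w \<in> V. \<forall>v \<in> V. \<forall>v' \<in> V. \<forall>\<alpha> \<rho>. \<alpha> 0 = w \<and> \<alpha> 1 = v \<and> \<alpha> 2 = v' \<longrightarrow>
                 (sat V E \<alpha> \<rho> \<phi>1 \<longleftrightarrow> (v, v') \<in> lhd1 V E w)))
            \<longrightarrow> (\<forall>(V :: nat set) E. graph V E \<and> prime_graph V E \<and> permutation_graph V E \<longrightarrow>
                 (\<exists>w \<in> V. linear_order_on V
                    {(v, v') | v v'. v \<in> V \<and> v' \<in> V \<and>
                       sat V E ((\<lambda>_. w)(1 := v, 2 := v')) (\<lambda>_. {}) (FOr \<phi>1 (FEq 1 2))})))"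
proof (rule conjI)
  show "\<exists>\<phi>1 :: fp. \<forall>(V :: nat set) E. graph V E \<and> prime_graph V E \<and> permutation_graph V E \<longrightarrow>
            (\<forall>w \<in> V. \<forall>v \<in> V. \<forall>v' \<in> V. \<forall>\<alpha> \<rho>. \<alpha> 0 = w \<and> \<alpha> 1 = v \<and> \<alpha> 2 = v' \<longrightarrow>
               (sat V E \<alpha> \<rho> \<phi>1 \<longleftrightarrow> (v, v') \<in> lhd1 V E w))"
  proof (rule exI[of _ phi1], intro allI impI ballI)
    fix V :: "nat set" and E :: "nat set set" and w v v' :: nat and \<alpha> :: "nat \<Rightarrow> nat" and \<rho> :: "nat \<Rightarrow> nat list set"
    assume "w \<in> V" "v \<in> V" "v' \<in> V" and a: "\<alpha> 0 = w \<and> \<alpha> 1 = v \<and> \<alpha> 2 = v'"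
    have s1: "sat V E \<alpha> \<rho> phi1 \<longleftrightarrow> [w,v,v'] \<in> I V E w"
      using a by (intro sat_phi1) auto
    have s2: "[w,v,v'] \<in> I V E w \<longleftrightarrow> (v,v') \<in> lhd1 V E w"
      by (rule phi1_correct) fact+
    show "sat V E \<alpha> \<rho> phi1 \<longleftrightarrow> (v, v') \<in> lhd1 V E w"
      using s1 s2 by (rule trans)
  qed
next
  show "\<forall>\<phi>1 :: fp.
            (\<forall>(V :: nat set) E. graph V E \<and> prime_graph V E \<and> permutation_graph V E \<longrightarrow>
              (\<forall>w \<in> V. \<forall>v \<in> V. \<forall>v' \<in> V. \<forall>\<alpha> \<rho>. \<alpha> 0 = w \<and> \<alpha> 1 = v \<and> \<alpha> 2 = v' \<longrightarrow>
                 (sat V E \<alpha> \<rho> \<phi>1 \<longleftrightarrow> (v, v') \<in> lhd1 V E w)))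
            \<longrightarrow> (\<forall>(V :: nat set) E. graph V E \<and> prime_graph V E \<and> permutation_graph V E \<longrightarrow>
                 (\<exists>w \<in> V. linear_order_on V
                    {(v, v') | v v'. v \<in> V \<and> v' \<in> V \<and>
                       sat V E ((\<lambda>_. w)(1 := v, 2 := v')) (\<lambda>_. {}) (FOr \<phi>1 (FEq 1 2))}))"
  proof (intro allI impI)
    fix \<phi>1 :: fp and V :: "nat set" and E :: "nat set set"
    assume H: "\<forall>(V :: nat set) E. graph V E \<and> prime_graph V E \<and> permutation_graph V E \<longrightarrow>
              (\<forall>w \<in> V. \<forall>v \<in> V. \<forall>v' \<in> V. \<forall>\<alpha> \<rho>. \<alpha> 0 = w \<and> \<alpha> 1 = v \<and> \<alpha> 2 = v' \<longrightarrow>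
                 (sat V E \<alpha> \<rho> \<phi>1 \<longleftrightarrow> (v, v') \<in> lhd1 V E w))"
      and g: "graph V E \<and> prime_graph V E \<and> permutation_graph V E"
    obtain w where wV: "w \<in> V" and lin: "linear_order_on V {(v, v') | v v'. v \<in> V \<and> v' \<in> V \<and> ((v,v') \<in> lhd1 V E w \<or> v = v')}"
      using part2[of V E] g by blast
    have H2: "sat V E \<alpha> \<rho> \<phi>1 \<longleftrightarrow> (v, v') \<in> lhd1 V E w"
      if "v \<in> V" "v' \<in> V" "\<alpha> 0 = w" "\<alpha> 1 = v" "\<alpha> 2 = v'" for v v' :: nat and \<alpha> :: "nat \<Rightarrow> nat" and \<rho> :: "nat \<Rightarrow> nat list set"
      by (rule H[rule_format]) (use g wV that in auto)
    have eq: "{(v, v') | v v'. v \<in> V \<and> v' \<in> V \<and>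
                       sat V E ((\<lambda>_. w)(1 := v, 2 := v')) (\<lambda>_. {}) (FOr \<phi>1 (FEq 1 2))}
       = {(v, v') | v v'. v \<in> V \<and> v' \<in> V \<and> ((v,v') \<in> lhd1 V E w \<or> v = v')}"
    proof -
      have "sat V E ((\<lambda>_. w)(1 := v, 2 := v')) (\<lambda>_. {}) (FOr \<phi>1 (FEq 1 2)) \<longleftrightarrow> ((v,v') \<in> lhd1 V E w \<or> v = v')"
        if "v \<in> V" "v' \<in> V" for v v'
        using H2[OF that, of "(\<lambda>_. w)(1 := v, 2 := v')" "\<lambda>_. {}"] by simp
      then show ?thesis by blast
    qed
    show "\<exists>w \<in> V. linear_order_on V
                    {(v, v') | v v'. v \<in> V \<and> v' \<in> V \<and>
                       sat V E ((\<lambda>_. w)(1 := v, 2 := v')) (\<lambda>_. {}) (FOr \<phi>1 (FEq 1 2))}"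
    proof -
      have "linear_order_on V
                    {(v, v') | v v'. v \<in> V \<and> v' \<in> V \<and>
                       sat V E ((\<lambda>_. w)(1 := v, 2 := v')) (\<lambda>_. {}) (FOr \<phi>1 (FEq 1 2))}"
        using lin by (simp only: eq)
      with wV show ?thesis by (intro bexI[where x=w])
    qed
  qed
qed

end
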